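(* For $\lambda\ge0$ let $P_\lambda(q)=\lambda\int_0^qv(t)\,dt+(1-\lambda)\,q\,v(q)$ on $[0,1]$, let $\bar P_\lambda$ be its concave hull, $R^*(\lambda)=\max_{q\in[0,1]}P_\lambda(q)=\max_q\bar P_\lambda(q)$, $Q^*(\lambda)=\arg\max_{q\in[0,1]}\bar P_\lambda(q)$ (a point or a closed interval), $\ell(\lambda)=\inf Q^*(\lambda)$ and $r(\lambda)=\sup Q^*(\lambda)$. Then: (1) $R^*$ is continuous on $[0,\infty)$; (2) for any $\lambda>\lambda'\ge0$, $\ell(\lambda)\ge\ell(\lambda')$ and $r(\lambda)\ge r(\lambda')$; (3) $\lambda\mapsto Q^*(\lambda)$ is upper hemicontinuous on $[0,1]$; (4) for every $q\in[\ell(0),1]$ there is $\lambda\ge0$ with $q\in Q^*(\lambda)$; (5) if $\lambda'<\lambda$ and $\ell(\lambda)<r(\lambda')$, then $r(\lambda')=r(\lambda)=1$.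
   Context: $F$ is a value distribution (support $[v_L,v_H]$ or $[v_L,\infty)$, $v_L\ge0$, atomless except possibly at $v_H$, CDF $F(t)=\Pr[v<t]$, differentiable on the interior, with some price maximizing $p(1-F(p))$, finite mean). The value function is $v(q)=\inf\{v:F(v)>1-q\}$ for quantile $q\in[0,1]$; it is nonincreasing, nonnegative and left-continuous, and $q\,v(q)$ at $q=0$ is defined as its limit as $q\to0$. *)

theory Defs
  imports "HOL-Analysis.Analysis"
begin

text \<open>Standing assumptions on the value distribution. F t = Pr[v < t];
  support [vL, vH] (vH finite) or [vL, \<infinity>) (vH = \<infinity>).\<close>
definition value_dist :: "(real \<Rightarrow> real) \<Rightarrow> real \<Rightarrow> ereal \<Rightarrow> bool" where
  "value_dist F vL vH \<longleftrightarrow>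
     0 \<le> vL \<and> ereal vL \<le> vH \<and>
     \<comment> \<open>F is the (left-continuous) CDF t \<mapsto> Pr[v < t] of a probability distribution\<close>
     mono F \<and> (\<forall>t. (F \<longlongrightarrow> F t) (at_left t)) \<and> (F \<longlongrightarrow> 1) at_top \<and>
     \<comment> \<open>support is exactly [vL, vH] (resp. [vL, \<infinity>))\<close>
     (\<forall>t. t \<le> vL \<longrightarrow> F t = 0) \<and> (\<forall>t. vH < ereal t \<longrightarrow> F t = 1) \<and>
     strict_mono_on {t. vL \<le> t \<and> ereal t \<le> vH} F \<and>
     \<comment> \<open>atomless except possibly at vH\<close>
     (\<forall>t. ereal t \<noteq> vH \<longrightarrow> isCont F t) \<and>
     \<comment> \<open>differentiable on the interior of the support\<close>
     (\<forall>t. vL < t \<and> ereal t < vH \<longrightarrow> F differentiable (at t)) \<and>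
     \<comment> \<open>some price maximizes p (1 - F p)\<close>
     (\<exists>p\<ge>0. \<forall>p'\<ge>0. p' * (1 - F p') \<le> p * (1 - F p)) \<and>
     \<comment> \<open>finite mean: E[v] = \<integral>_0^\<infinity> (1 - F t) dt < \<infinity>\<close>
     (\<lambda>t. 1 - F t) integrable_on {0..}"

definition vq :: "(real \<Rightarrow> real) \<Rightarrow> real \<Rightarrow> real" where
  "vq F q = Inf {x. F x > 1 - q}"

definition qv :: "(real \<Rightarrow> real) \<Rightarrow> real \<Rightarrow> real" where
  "qv F q = (if q = 0 then Lim (at_right 0) (\<lambda>t. t * vq F t) else q * vq F q)"

definition Plam :: "(real \<Rightarrow> real) \<Rightarrow> real \<Rightarrow> real \<Rightarrow> real" where
  "Plam F lam q = lam * integral {0..q} (vq F) + (1 - lam) * qv F q"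

definition concave_hull01 :: "(real \<Rightarrow> real) \<Rightarrow> real \<Rightarrow> real" where
  "concave_hull01 P q =
     Inf {g q | g. concave_on {0..1} g \<and> (\<forall>x\<in>{0..1}. P x \<le> g x)}"

definition Pbar :: "(real \<Rightarrow> real) \<Rightarrow> real \<Rightarrow> real \<Rightarrow> real" where
  "Pbar F lam = concave_hull01 (Plam F lam)"

definition Rstar :: "(real \<Rightarrow> real) \<Rightarrow> real \<Rightarrow> real" where
  "Rstar F lam = Sup (Plam F lam ` {0..1})"

definition Qstar :: "(real \<Rightarrow> real) \<Rightarrow> real \<Rightarrow> real set" where
  "Qstar F lam = {q \<in> {0..1}. \<forall>q'\<in>{0..1}. Pbar F lam q' \<le> Pbar F lam q}"

definition lQ :: "(real \<Rightarrow> real) \<Rightarrow> real \<Rightarrow> real" where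
  "lQ F lam = Inf (Qstar F lam)"

definition rQ :: "(real \<Rightarrow> real) \<Rightarrow> real \<Rightarrow> real" where
  "rQ F lam = Sup (Qstar F lam)"

definition upper_hemicontinuous_on :: "'a::topological_space set \<Rightarrow> ('a \<Rightarrow> 'b::topological_space set) \<Rightarrow> bool" where
  "upper_hemicontinuous_on S \<Phi> \<longleftrightarrow>
     (\<forall>x\<in>S. \<forall>U. open U \<and> \<Phi> x \<subseteq> U \<longrightarrow> (\<forall>\<^sub>F y in at x within S. \<Phi> y \<subseteq> U))"

end

theory Submission
  imports Defs
begin


lemma hull_le:
  assumes "x \<in> {0..1}" "\<forall>y\<in>{0..1}. P y \<le> M"
  shows "P x \<le> concave_hull01 P x" "concave_hull01 P x \<le> M"
proof -
  let ?G = "{g x | g. concave_on {0..1} g \<and> (\<forall>y\<in>{0..1}. P y \<le> g y)}"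
  have ne: "M \<in> ?G" using assms(2) by (auto intro!: exI[of _ "\<lambda>_. M"] simp: concave_on_const)
  have bdd: "bdd_below ?G" using assms(1) by (intro bdd_belowI[of _ "P x"]) auto
  show "concave_hull01 P x \<le> M" unfolding concave_hull01_def by (rule cInf_lower[OF ne bdd])
  show "P x \<le> concave_hull01 P x" unfolding concave_hull01_def using assms(1) ne
    by (intro cInf_greatest) auto
qed

lemma hull_between:
  assumes "a \<in> {0..1}" "b \<in> {0..1}" "a \<le> x" "x \<le> b" "P a = M" "P b = M"
    "\<forall>y\<in>{0..1}. P y \<le> M"
  shows "M \<le> concave_hull01 P x"
  unfolding concave_hull01_def
proof (rule cInf_greatest)
  show "{g x | g. concave_on {0..1} g \<and> (\<forall>y\<in>{0..1}. P y \<le> g y)} \<noteq> {}"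
    using assms(7) by (auto intro!: exI[of _ "\<lambda>_. M"] simp: concave_on_const)
next
  fix z assume "z \<in> {g x | g. concave_on {0..1} g \<and> (\<forall>y\<in>{0..1}. P y \<le> g y)}"
  then obtain g where z: "z = g x" and cg: "concave_on {0..1} g" and maj: "\<forall>y\<in>{0..1}. P y \<le> g y"
    by auto
  have ga: "M \<le> g a" using maj assms(1,5) by force
  have gb: "M \<le> g b" using maj assms(2,6) by force
  show "M \<le> z"
  proof (cases "a = b")
    case True
    then have "x = a" using assms by auto
    then show ?thesis using ga z by simp
  next
    case False
    then have ab: "a < b" using assms by auto
    define t where "t = (x - a) / (b - a)"
    have t0: "t \<ge> 0" and t1: "t \<le> 1" using ab assms(3,4) by (auto simp: t_def field_simps)
    have tt: "t * (b - a) = x - a" using ab by (simp add: t_def)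
    have "(1 - t) * a + t * b = a + t * (b - a)" by (simp add: algebra_simps)
    then have xe: "(1 - t) *\<^sub>R a + t *\<^sub>R b = x" using tt by simp
    have "(1 - t) * g a + t * g b \<le> g ((1 - t) *\<^sub>R a + t *\<^sub>R b)"
      by (rule concave_onD[OF cg t0 t1]) (use assms(1,2) in simp_all)
    moreover have "M \<le> (1 - t) * g a + t * g b"
    proof -
      have "(1 - t) * M \<le> (1 - t) * g a" using ga t1 by (intro mult_left_mono) auto
      moreover have "t * M \<le> t * g b" using gb t0 by (intro mult_left_mono) auto
      ultimately show ?thesis by (simp add: algebra_simps)
    qed
    ultimately show ?thesis using xe z by simp
  qed
qed

lemma min_affine_concave:
  "concave_on S (\<lambda>y::real. min (\<alpha> + \<beta> * y) (\<gamma> + \<delta> * y))" if "convex S"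
  unfolding concave_on_iff
proof (intro conjI ballI allI impI that)
  fix x y u v :: real assume uv: "u \<ge> 0" "v \<ge> 0" "u + v = 1"
  have e1: "\<alpha> + \<beta> * (u *\<^sub>R x + v *\<^sub>R y) = u * (\<alpha> + \<beta> * x) + v * (\<alpha> + \<beta> * y)"
    proof -
      have "(u + v) * \<alpha> = \<alpha>" using uv(3) by simp
      then show ?thesis by (simp add: algebra_simps)
    qed
  have e2: "\<gamma> + \<delta> * (u *\<^sub>R x + v *\<^sub>R y) = u * (\<gamma> + \<delta> * x) + v * (\<gamma> + \<delta> * y)"
    proof -
      have "(u + v) * \<gamma> = \<gamma>" using uv(3) by simp
      then show ?thesis by (simp add: algebra_simps)
    qed
  show "u * min (\<alpha> + \<beta> * x) (\<gamma> + \<delta> * x) + v * min (\<alpha> + \<beta> * y) (\<gamma> + \<delta> * y)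
        \<le> min (\<alpha> + \<beta> * (u *\<^sub>R x + v *\<^sub>R y)) (\<gamma> + \<delta> * (u *\<^sub>R x + v *\<^sub>R y))"
    unfolding e1 e2 using uv by (intro min.boundedI add_mono mult_left_mono) auto
qed


lemma hull_lt_left:
  assumes "0 < c" "c \<le> 1" "\<forall>y\<in>{0..c}. P y \<le> M'" "M' < M" "\<forall>y\<in>{0..1}. P y \<le> M"
    "0 \<le> x" "x < c"
  shows "concave_hull01 P x < M"
proof -
  have xin: "x \<in> {0..1}" using assms by simp
  define s where "s = (M - M') / c"
  define g where "g = (\<lambda>y::real. min (M + 0 * y) (M' + s * y))"
  have cg: "concave_on {0..1} g" unfolding g_def by (rule min_affine_concave) (simp add: convex_real_interval)
  have maj: "\<forall>y\<in>{0..1}. P y \<le> g y"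
  proof
    fix y :: real assume y: "y \<in> {0..1}"
    have s0: "s \<ge> 0" using assms by (simp add: s_def)
    show "P y \<le> g y"
    proof (cases "y \<le> c")
      case True
      then have "P y \<le> M'" using assms(3) y by simp
      moreover have "M' \<le> M' + s * y" using s0 y by simp
      ultimately show ?thesis using assms(4) by (simp add: g_def)
    next
      case False
      have "s * c = M - M'" using assms(1) by (simp add: s_def)
      moreover have "s * c \<le> s * y" using False s0 by (intro mult_left_mono) auto
      ultimately have "M \<le> M' + s * y" by simp
      then show ?thesis using assms(5) y by (simp add: g_def)
    qed
  qed
  have "g x < M"
  proof -
    have "s * x < s * c" using assms by (intro mult_strict_left_mono) (auto simp: s_def)
    also have "s * c = M - M'" using assms(1) by (simp add: s_def)
    finally show ?thesis by (simp add: g_def)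
  qed
  moreover have "concave_hull01 P x \<le> g x"
    unfolding concave_hull01_def
  proof (rule cInf_lower)
    show "g x \<in> {g x | g. concave_on {0..1} g \<and> (\<forall>y\<in>{0..1}. P y \<le> g y)}" using cg maj by blast
    show "bdd_below {g x | g. concave_on {0..1} g \<and> (\<forall>y\<in>{0..1}. P y \<le> g y)}"
      by (rule bdd_belowI[of _ "P x"]) (use xin in force)
  qed
  ultimately show ?thesis by simp
qed

lemma hull_lt_right:
  assumes "0 \<le> c" "c < 1" "\<forall>y\<in>{c..1}. P y \<le> M'" "M' < M" "\<forall>y\<in>{0..1}. P y \<le> M"
    "x \<le> 1" "c < x"
  shows "concave_hull01 P x < M"
proof -
  have xin: "x \<in> {0..1}" using assms by simp
  define s where "s = (M - M') / (1 - c)"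
  define g where "g = (\<lambda>y::real. min (M + 0 * y) ((M' + s) + (- s) * y))"
  have cg: "concave_on {0..1} g" unfolding g_def by (rule min_affine_concave) (simp add: convex_real_interval)
  have s0: "s \<ge> 0" using assms by (simp add: s_def)
  have sc: "s * (1 - c) = M - M'" using assms(2) by (simp add: s_def)
  have maj: "\<forall>y\<in>{0..1}. P y \<le> g y"
  proof
    fix y :: real assume y: "y \<in> {0..1}"
    show "P y \<le> g y"
    proof (cases "c \<le> y")
      case True
      then have "P y \<le> M'" using assms(3) y by simp
      moreover have "0 \<le> s * (1 - y)" using s0 y by simp
      ultimately show ?thesis using assms(4) by (simp add: g_def algebra_simps)
    next
      case False
      have "s * (1 - c) \<le> s * (1 - y)" using False s0 by (intro mult_left_mono) auto
      then have "M \<le> (M' + s) + (- s) * y" using sc by (simp add: algebra_simps)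
      then show ?thesis using assms(5) y by (simp add: g_def)
    qed
  qed
  have "g x < M"
  proof -
    have "s * (1 - x) < s * (1 - c)" using assms by (intro mult_strict_left_mono) (auto simp: s_def)
    then show ?thesis using sc by (simp add: g_def algebra_simps)
  qed
  moreover have "concave_hull01 P x \<le> g x"
    unfolding concave_hull01_def
  proof (rule cInf_lower)
    show "g x \<in> {g x | g. concave_on {0..1} g \<and> (\<forall>y\<in>{0..1}. P y \<le> g y)}" using cg maj by blast
    show "bdd_below {g x | g. concave_on {0..1} g \<and> (\<forall>y\<in>{0..1}. P y \<le> g y)}"
      by (rule bdd_belowI[of _ "P x"]) (use xin in force)
  qed
  ultimately show ?thesis by simp
qed

lemma argmax_interval:
  fixes P :: "real \<Rightarrow> real"
  assumes "continuous_on {0..1} P"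
  shows "\<exists>a b M. a \<in> {0..1} \<and> b \<in> {0..1} \<and> a \<le> b \<and> P a = M \<and> P b = M \<and>
     (\<forall>x\<in>{0..1}. P x \<le> M) \<and> (\<forall>x\<in>{0..1}. P x = M \<longrightarrow> a \<le> x \<and> x \<le> b)"
proof -
  obtain m where m: "m \<in> {0..1}" "\<forall>y\<in>{0..1}. P y \<le> P m"
    using continuous_attains_sup[OF _ _ assms] by auto
  define Z where "Z = {x \<in> {0..1}. P x = P m}"
  have "closed Z" unfolding Z_def by (rule continuous_closed_preimage_constant[OF assms]) auto
  moreover have "bounded Z" by (rule bounded_subset[of "{0..1}"]) (auto simp: Z_def)
  ultimately have cZ: "compact Z" by (simp add: compact_eq_bounded_closed)
  have nZ: "Z \<noteq> {}" using m by (auto simp: Z_def)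
  obtain a where a: "a \<in> Z" "\<forall>t\<in>Z. a \<le> t" using compact_attains_inf[OF cZ nZ] by auto
  obtain b where b: "b \<in> Z" "\<forall>t\<in>Z. t \<le> b" using compact_attains_sup[OF cZ nZ] by auto
  show ?thesis
    by (rule exI[of _ a], rule exI[of _ b], rule exI[of _ "P m"]) (use a b m in \<open>auto simp: Z_def\<close>)
qed

lemma Q_eq:
  fixes P :: "real \<Rightarrow> real"
  assumes ab: "a \<in> {0..1}" "b \<in> {0..1}" "a \<le> b" "P a = M" "P b = M"
    and le: "\<forall>x\<in>{0..1}. P x \<le> M" and am: "\<forall>x\<in>{0..1}. P x = M \<longrightarrow> a \<le> x \<and> x \<le> b"
    and cont: "continuous_on {0..1} P"
  shows "{q \<in> {0..1}. \<forall>q'\<in>{0..1}. concave_hull01 P q' \<le> concave_hull01 P q} = {a..b}"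
proof -
  have hb: "concave_hull01 P x = M" if "x \<in> {a..b}" for x
  proof -
    have "x \<in> {0..1}" using that ab by auto
    then show ?thesis using hull_le[of x P M] hull_between[of a b x P M] ab le that by force
  qed
  have lt: "concave_hull01 P x < M" if x: "x \<in> {0..1}" "x \<notin> {a..b}" for x
  proof (cases "x < a")
    case True
    define c where "c = (x + a) / 2"
    have c: "0 < c" "c \<le> 1" "x < c" "c < a" using True x ab by (auto simp: c_def)
    obtain y0 where y0: "y0 \<in> {0..c}" "\<forall>y\<in>{0..c}. P y \<le> P y0"
      using continuous_attains_sup[of "{0..c}" P] continuous_on_subset[OF cont, of "{0..c}"] c by auto
    have "P y0 \<noteq> M" using am y0(1) c by force
    then have "P y0 < M" using le y0(1) c by force
    then show ?thesis using hull_lt_left[of c P "P y0" M x] c y0 le x by auto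
  next
    case False
    then have xb: "b < x" using x by auto
    define c where "c = (x + b) / 2"
    have c: "0 \<le> c" "c < 1" "c < x" "b < c" using xb x ab by (auto simp: c_def)
    obtain y0 where y0: "y0 \<in> {c..1}" "\<forall>y\<in>{c..1}. P y \<le> P y0"
      using continuous_attains_sup[of "{c..1}" P] continuous_on_subset[OF cont, of "{c..1}"] c by auto
    have "P y0 \<noteq> M" using am y0(1) c by force
    moreover have "y0 \<in> {0..1}" using y0(1) c by auto
    ultimately have "P y0 < M" using le by force
    then show ?thesis using hull_lt_right[of c P "P y0" M x] c y0 le x by auto
  qed
  show ?thesis
  proof (intro equalityI subsetI)
    fix q assume "q \<in> {q \<in> {0..1}. \<forall>q'\<in>{0..1}. concave_hull01 P q' \<le> concave_hull01 P q}"
    then have q: "q \<in> {0..1}" "concave_hull01 P a \<le> concave_hull01 P q" using ab by auto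
    show "q \<in> {a..b}"
    proof (rule ccontr)
      assume "q \<notin> {a..b}"
      then have "concave_hull01 P q < M" using lt q by auto
      moreover have "concave_hull01 P a = M" using hb ab by auto
      ultimately show False using q by auto
    qed
  next
    fix q assume q: "q \<in> {a..b}"
    then have "q \<in> {0..1}" using ab by auto
    moreover have "concave_hull01 P q' \<le> concave_hull01 P q" if "q' \<in> {0..1}" for q'
      using hull_le(2)[OF that le] hb[OF q] by simp
    ultimately show "q \<in> {q \<in> {0..1}. \<forall>q'\<in>{0..1}. concave_hull01 P q' \<le> concave_hull01 P q}" by auto
  qed
qed

lemma fact_lam:
  assumes "continuous_on {0..1} (Plam F lam)"
  shows "lQ F lam \<in> {0..1} \<and> rQ F lam \<in> {0..1} \<and> lQ F lam \<le> rQ F lam \<and>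
    Plam F lam (lQ F lam) = Rstar F lam \<and> Plam F lam (rQ F lam) = Rstar F lam \<and>
    (\<forall>x\<in>{0..1}. Plam F lam x \<le> Rstar F lam) \<and>
    (\<forall>x\<in>{0..1}. Plam F lam x = Rstar F lam \<longrightarrow> lQ F lam \<le> x \<and> x \<le> rQ F lam) \<and>
    Qstar F lam = {lQ F lam..rQ F lam}"
proof -
  obtain a b M where ab: "a \<in> {0..1}" "b \<in> {0..1}" "a \<le> b" "Plam F lam a = M" "Plam F lam b = M"
    "\<forall>x\<in>{0..1}. Plam F lam x \<le> M" "\<forall>x\<in>{0..1}. Plam F lam x = M \<longrightarrow> a \<le> x \<and> x \<le> b"
    using argmax_interval[OF assms] by blast
  have Q: "Qstar F lam = {a..b}" unfolding Qstar_def Pbar_def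
    by (rule Q_eq[of a b "Plam F lam" M]) (use ab assms in auto)
  have l: "lQ F lam = a" unfolding lQ_def Q using ab(3) by simp
  have r: "rQ F lam = b" unfolding rQ_def Q using ab(3) by simp
  have R: "Rstar F lam = M" unfolding Rstar_def
    by (rule cSup_eq_maximum) (use ab in auto)
  show ?thesis unfolding l r R Q using ab by auto
qed



lemma ABS:
  fixes F A B :: "real \<Rightarrow> real"
  assumes Pdef: "\<And>lam q. Plam F lam q = lam * A q + (1 - lam) * B q"
    and cA: "continuous_on {0..1} A" and cB: "continuous_on {0..1} B"
    and Dmono: "\<And>x y. 0 \<le> x \<Longrightarrow> x \<le> y \<Longrightarrow> y \<le> 1 \<Longrightarrow> A x - B x \<le> A y - B y"
    and Amono: "\<And>x. x \<in> {0..1} \<Longrightarrow> A x \<le> A 1"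
    and X: "\<And>x y. 0 \<le> x \<Longrightarrow> x < y \<Longrightarrow> y \<le> 1 \<Longrightarrow> A x - B x = A y - B y \<Longrightarrow> B x = B y
              \<Longrightarrow> A 1 = A y \<and> B 1 = B y"
  shows "continuous_on {0..} (Rstar F) \<and>
     (\<forall>lam lam'. 0 \<le> lam' \<and> lam' < lam \<longrightarrow> lQ F lam \<ge> lQ F lam' \<and> rQ F lam \<ge> rQ F lam') \<and>
     upper_hemicontinuous_on {0..1} (Qstar F) \<and>
     (\<forall>q\<in>{lQ F 0..1}. \<exists>lam\<ge>0. q \<in> Qstar F lam) \<and>
     (\<forall>lam lam'. 0 \<le> lam' \<and> lam' < lam \<and> lQ F lam < rQ F lam' \<longrightarrow> rQ F lam' = 1 \<and> rQ F lam = 1)"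
proof -
  define D where "D q = A q - B q" for q
  have PD: "Plam F lam q = B q + lam * D q" for lam q by (simp add: Pdef D_def algebra_simps)
  have cD: "continuous_on {0..1} D" unfolding D_def by (intro continuous_intros cA cB)
  have cP: "continuous_on {0..1} (Plam F lam)" for lam
  proof -
    have "Plam F lam = (\<lambda>q. B q + lam * D q)" by (rule ext) (simp add: PD)
    then show ?thesis by (simp add: continuous_intros cB cD)
  qed
  note FL = fact_lam[OF cP]
  have lin: "lQ F lam \<in> {0..1}" "rQ F lam \<in> {0..1}" "lQ F lam \<le> rQ F lam" for lam using FL[of lam] by auto
  have lmax: "Plam F lam (lQ F lam) = Rstar F lam" "Plam F lam (rQ F lam) = Rstar F lam" for lam
    using FL[of lam] by auto
  have Rge: "\<And>x. x \<in> {0..1} \<Longrightarrow> Plam F lam x \<le> Rstar F lam" for lam using FL[of lam] by auto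
  have amx: "\<And>x. x \<in> {0..1} \<Longrightarrow> Plam F lam x = Rstar F lam \<Longrightarrow> lQ F lam \<le> x \<and> x \<le> rQ F lam" for lam
    using FL[of lam] by auto
  have Qe: "Qstar F lam = {lQ F lam..rQ F lam}" for lam using FL[of lam] by auto
  obtain Kb where Kb: "Kb > 0" "\<And>x. x \<in> {0..1} \<Longrightarrow> \<bar>D x\<bar> \<le> Kb"
  proof -
    have "bounded (D ` {0..1})" by (intro compact_imp_bounded compact_continuous_image cD) auto
    then obtain b where "b > 0" "\<forall>y\<in>D ` {0..1}. norm y \<le> b" by (auto simp: bounded_pos)
    then show ?thesis using that[of b] by auto
  qed
  have diff: "\<bar>Plam F lam x - Plam F mu x\<bar> \<le> \<bar>lam - mu\<bar> * Kb" if "x \<in> {0..1}" for lam mu x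
  proof -
    have "Plam F lam x - Plam F mu x = (lam - mu) * D x" by (simp add: PD algebra_simps)
    then have "\<bar>Plam F lam x - Plam F mu x\<bar> = \<bar>lam - mu\<bar> * \<bar>D x\<bar>" by (simp add: abs_mult)
    also have "\<dots> \<le> \<bar>lam - mu\<bar> * Kb" using Kb(2)[OF that] by (intro mult_left_mono) auto
    finally show ?thesis .
  qed
  have Rlip: "\<bar>Rstar F lam - Rstar F mu\<bar> \<le> \<bar>lam - mu\<bar> * Kb" for lam mu
  proof -
    have "Rstar F lam \<le> Rstar F mu + \<bar>lam - mu\<bar> * Kb" for lam mu
    proof -
      have "Rstar F lam = Plam F lam (lQ F lam)" using lmax by simp
      also have "\<dots> \<le> Plam F mu (lQ F lam) + \<bar>lam - mu\<bar> * Kb" using diff[OF lin(1)[of lam], of lam mu] by simp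
      also have "\<dots> \<le> Rstar F mu + \<bar>lam - mu\<bar> * Kb" using Rge[OF lin(1)[of lam], of mu] by simp
      finally show ?thesis .
    qed
    from this[of lam mu] this[of mu lam] show ?thesis by (simp add: abs_minus_commute abs_le_iff)
  qed
  have SC: "D x = D y \<and> Plam F lam y = Rstar F lam \<and> Plam F lam' x = Rstar F lam' \<and> B x = B y"
    if lt: "lam' < lam" and x: "x \<in> {0..1}" "Plam F lam x = Rstar F lam"
      and y: "y \<in> {0..1}" "Plam F lam' y = Rstar F lam'" and xy: "x < y" for lam lam' x y
  proof -
    have h1: "B y + lam * D y \<le> B x + lam * D x" using Rge[OF y(1), of lam] x(2) by (simp add: PD)
    have h2: "B x + lam' * D x \<le> B y + lam' * D y" using Rge[OF x(1), of lam'] y(2) by (simp add: PD)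
    have "0 \<le> (lam - lam') * (D x - D y)" using h1 h2 by (simp add: algebra_simps)
    then have "D y \<le> D x" using lt by (simp add: zero_le_mult_iff)
    moreover have "D x \<le> D y" using Dmono[of x y] x y xy by (simp add: D_def)
    ultimately have Dxy: "D x = D y" by simp
    then have "B y = B x" using h1 h2 by simp
    then show ?thesis using Dxy x y by (simp add: PD)
  qed
  have part1: "continuous_on {0..} (Rstar F)"
    unfolding continuous_on_iff
  proof (intro ballI allI impI)
    fix x e :: real assume "0 < e"
    show "\<exists>d>0. \<forall>x'\<in>{0..}. dist x' x < d \<longrightarrow> dist (Rstar F x') (Rstar F x) < e"
    proof (intro exI[of _ "e / Kb"] conjI ballI impI)
      show "0 < e / Kb" using \<open>0 < e\<close> Kb by simp
      fix x' :: real assume "dist x' x < e / Kb"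
      then have "\<bar>x' - x\<bar> * Kb < e" using Kb by (simp add: dist_real_def field_simps)
      then show "dist (Rstar F x') (Rstar F x) < e" using Rlip[of x' x] by (simp add: dist_real_def)
    qed
  qed
  have part2: "\<forall>lam lam'. 0 \<le> lam' \<and> lam' < lam \<longrightarrow> lQ F lam \<ge> lQ F lam' \<and> rQ F lam \<ge> rQ F lam'"
  proof (intro allI impI conjI)
    fix lam lam' :: real assume h: "0 \<le> lam' \<and> lam' < lam"
    show "lQ F lam \<ge> lQ F lam'"
    proof (rule ccontr)
      assume "\<not> ?thesis"
      then have "lQ F lam < lQ F lam'" by simp
      from SC[OF _ lin(1) lmax(1) lin(1) lmax(1) this] h
      have "Plam F lam' (lQ F lam) = Rstar F lam'" by auto
      then have "lQ F lam' \<le> lQ F lam" using amx[OF lin(1)[of lam], of lam'] by blast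
      with \<open>lQ F lam < lQ F lam'\<close> show False by simp
    qed
    show "rQ F lam \<ge> rQ F lam'"
    proof (rule ccontr)
      assume "\<not> ?thesis"
      then have "rQ F lam < rQ F lam'" by simp
      from SC[OF _ lin(2) lmax(2) lin(2) lmax(2) this] h
      have "Plam F lam (rQ F lam') = Rstar F lam" by auto
      then have "rQ F lam' \<le> rQ F lam" using amx[OF lin(2)[of lam'], of lam] by blast
      with \<open>rQ F lam < rQ F lam'\<close> show False by simp
    qed
  qed
  have part5: "\<forall>lam lam'. 0 \<le> lam' \<and> lam' < lam \<and> lQ F lam < rQ F lam' \<longrightarrow> rQ F lam' = 1 \<and> rQ F lam = 1"
  proof (intro allI impI)
    fix lam lam' :: real assume h: "0 \<le> lam' \<and> lam' < lam \<and> lQ F lam < rQ F lam'"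
    let ?x = "lQ F lam" and ?y = "rQ F lam'"
    have s: "D ?x = D ?y" "Plam F lam ?y = Rstar F lam" "B ?x = B ?y"
      using SC[of lam' lam "lQ F lam" "rQ F lam'"] h lin(1)[of lam] lmax(1)[of lam] lin(2)[of lam'] lmax(2)[of lam']
      by auto
    have "A 1 = A ?y \<and> B 1 = B ?y"
      using X[of ?x ?y] s lin[of lam] lin[of lam'] h by (auto simp: D_def)
    then have P1: "Plam F mu 1 = Plam F mu ?y" for mu by (simp add: Pdef)
    have "rQ F lam' \<ge> 1" using amx[of 1 lam'] P1[of lam'] lmax(2)[of lam'] by auto
    moreover have "rQ F lam \<ge> 1" using amx[of 1 lam] P1[of lam] s(2) by auto
    ultimately show "rQ F lam' = 1 \<and> rQ F lam = 1" using lin(2)[of lam] lin(2)[of lam'] by auto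
  qed
  have SEMI: "\<exists>d>0. \<forall>lam. \<bar>lam - lam0\<bar> < d \<longrightarrow>
      (\<forall>x\<in>{0..1}. Plam F lam x = Rstar F lam \<longrightarrow> lQ F lam0 - \<epsilon> < x \<and> x < rQ F lam0 + \<epsilon>)"
    if "\<epsilon> > 0" for lam0 \<epsilon>
  proof -
    define K where "K = {0..1} \<inter> ({..lQ F lam0 - \<epsilon>} \<union> {rQ F lam0 + \<epsilon>..})"
    show ?thesis
    proof (cases "K = {}")
      case True
      show ?thesis
        by (rule exI[of _ 1]) (use True in \<open>auto simp: K_def\<close>)
    next
      case False
      have "closed K" unfolding K_def by (intro closed_Int closed_Un) auto
      moreover have "bounded K" unfolding K_def by (rule bounded_subset[of "{0..1}"]) auto
      ultimately have cK: "compact K" by (simp add: compact_eq_bounded_closed)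
      have Ksub: "K \<subseteq> {0..1}" by (auto simp: K_def)
      obtain k0 where k0: "k0 \<in> K" "\<forall>y\<in>K. Plam F lam0 y \<le> Plam F lam0 k0"
        using continuous_attains_sup[OF cK False continuous_on_subset[OF cP[of lam0] Ksub]] by blast
      have k01: "k0 \<in> {0..1}" using k0 by (auto simp: K_def)
      have "Plam F lam0 k0 \<noteq> Rstar F lam0"
      proof
        assume "Plam F lam0 k0 = Rstar F lam0"
        then have "lQ F lam0 \<le> k0 \<and> k0 \<le> rQ F lam0" using amx[OF k01, of lam0] by blast
        then show False using k0(1) \<open>\<epsilon> > 0\<close> by (auto simp: K_def)
      qed
      then have gpos: "Plam F lam0 k0 < Rstar F lam0" using Rge[OF k01, of lam0] by force
      define g where "g = Rstar F lam0 - Plam F lam0 k0"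
      have g0: "g > 0" using gpos by (simp add: g_def)
      show ?thesis
      proof (intro exI[of _ "g / (2 * Kb)"] conjI allI impI ballI)
        show "0 < g / (2 * Kb)" using g0 Kb by simp
        fix lam x assume d: "\<bar>lam - lam0\<bar> < g / (2 * Kb)" and x: "x \<in> {0..1}"
          and xm: "Plam F lam x = Rstar F lam"
        have dK: "\<bar>lam - lam0\<bar> * Kb < g / 2" using d Kb by (simp add: field_simps)
        have "x \<notin> K"
        proof
          assume "x \<in> K"
          then have "Plam F lam0 x \<le> Plam F lam0 k0" using k0 by auto
          moreover have "Plam F lam x \<le> Plam F lam0 x + \<bar>lam - lam0\<bar> * Kb" using diff[OF x, of lam lam0] by simp
          moreover have "Plam F lam0 (lQ F lam0) \<le> Plam F lam (lQ F lam0) + \<bar>lam - lam0\<bar> * Kb"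
            using diff[OF lin(1)[of lam0], of lam0 lam] by (simp add: abs_minus_commute)
          moreover have "Plam F lam (lQ F lam0) \<le> Rstar F lam" using Rge[OF lin(1)[of lam0], of lam] by simp
          ultimately show False using xm dK lmax(1)[of lam0] by (simp add: g_def)
        qed
        then show "lQ F lam0 - \<epsilon> < x" "x < rQ F lam0 + \<epsilon>" using x by (auto simp: K_def)
      qed
    qed
  qed
  have part3: "upper_hemicontinuous_on {0..1} (Qstar F)"
    unfolding upper_hemicontinuous_on_def
  proof (intro ballI allI impI)
    fix lam0 :: real and U :: "real set"
    assume "lam0 \<in> {0..1}" and U: "open U \<and> Qstar F lam0 \<subseteq> U"
    have lU: "lQ F lam0 \<in> U" and rU: "rQ F lam0 \<in> U" using U lin[of lam0] Qe[of lam0] by auto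
    obtain e1 where e1: "e1 > 0" "ball (lQ F lam0) e1 \<subseteq> U" using U lU open_contains_ball by blast
    obtain e2 where e2: "e2 > 0" "ball (rQ F lam0) e2 \<subseteq> U" using U rU open_contains_ball by blast
    define \<epsilon> where "\<epsilon> = min e1 e2"
    have e0: "\<epsilon> > 0" using e1 e2 by (simp add: \<epsilon>_def)
    have sub: "{lQ F lam0 - \<epsilon> <..< rQ F lam0 + \<epsilon>} \<subseteq> U"
    proof
      fix z assume z: "z \<in> {lQ F lam0 - \<epsilon> <..< rQ F lam0 + \<epsilon>}"
      consider "z < lQ F lam0" | "rQ F lam0 < z" | "z \<in> {lQ F lam0..rQ F lam0}" by fastforce
      then show "z \<in> U"
      proof cases
        case 1 then have "z \<in> ball (lQ F lam0) e1" using z by (auto simp: \<epsilon>_def dist_real_def)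
        then show ?thesis using e1 by auto
      next
        case 2 then have "z \<in> ball (rQ F lam0) e2" using z by (auto simp: \<epsilon>_def dist_real_def)
        then show ?thesis using e2 by auto
      next
        case 3 then show ?thesis using U Qe[of lam0] by auto
      qed
    qed
    obtain d where d: "d > 0" "\<And>lam. \<bar>lam - lam0\<bar> < d \<Longrightarrow>
      (\<forall>x\<in>{0..1}. Plam F lam x = Rstar F lam \<longrightarrow> lQ F lam0 - \<epsilon> < x \<and> x < rQ F lam0 + \<epsilon>)"
      using SEMI[OF e0, of lam0] by blast
    show "\<forall>\<^sub>F y in at lam0 within {0..1}. Qstar F y \<subseteq> U"
      unfolding eventually_at
    proof (intro exI[of _ d] conjI ballI impI)
      show "d > 0" by fact
      fix lam assume "lam \<in> {0..1}" "lam \<noteq> lam0 \<and> dist lam lam0 < d"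
      then have "\<bar>lam - lam0\<bar> < d" by (simp add: dist_real_def)
      from d(2)[OF this] have "lQ F lam0 - \<epsilon> < lQ F lam" "rQ F lam < rQ F lam0 + \<epsilon>"
        using lin[of lam] lmax[of lam] by auto
      then have "Qstar F lam \<subseteq> {lQ F lam0 - \<epsilon> <..< rQ F lam0 + \<epsilon>}" using Qe[of lam] by auto
      then show "Qstar F lam \<subseteq> U" using sub by auto
    qed
  qed
  have r1: "rQ F 1 = 1"
  proof -
    have "Plam F 1 1 = Rstar F 1"
    proof -
      have "Plam F 1 x \<le> Plam F 1 1" if "x \<in> {0..1}" for x using Amono[OF that] by (simp add: Pdef)
      then have "Plam F 1 (lQ F 1) \<le> Plam F 1 1" using lin(1) by blast
      then show ?thesis using lmax(1)[of 1] Rge[of 1 1] by simp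
    qed
    then show ?thesis using amx[of 1 1] lin(2)[of 1] by auto
  qed
  have part4: "\<forall>q\<in>{lQ F 0..1}. \<exists>lam\<ge>0. q \<in> Qstar F lam"
  proof
    fix q assume q: "q \<in> {lQ F 0..1}"
    define T where "T = {lam \<in> {0..1}. rQ F lam < q}"
    show "\<exists>lam\<ge>0. q \<in> Qstar F lam"
    proof (cases "T = {}")
      case True
      then have "q \<le> rQ F 0" by (auto simp: T_def not_less)
      then show ?thesis using q Qe[of 0] by (intro exI[of _ 0]) auto
    next
      case False
      define s where "s = Sup T"
      have bT: "bdd_above T" by (rule bdd_aboveI[of _ 1]) (auto simp: T_def)
      have sT: "t \<le> s" if "t \<in> T" for t using cSup_upper[OF that bT] by (simp add: s_def)
      have s1: "s \<le> 1" using cSup_least[OF False] by (auto simp: T_def s_def)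
      have s0: "0 \<le> s" using False sT by (force simp: T_def)
      have 1: "q \<le> rQ F s"
      proof (cases "s \<in> T")
        case False
        then show ?thesis using s0 s1 by (auto simp: T_def)
      next
        case True
        have "s \<noteq> 1" using True r1 q by (auto simp: T_def)
        then have sl1: "s < 1" using s1 by simp
        show ?thesis
        proof (rule ccontr)
          assume "\<not> ?thesis"
          then have e0: "q - rQ F s > 0" by simp
          obtain d where d: "d > 0" "\<And>lam. \<bar>lam - s\<bar> < d \<Longrightarrow>
            (\<forall>x\<in>{0..1}. Plam F lam x = Rstar F lam \<longrightarrow> lQ F s - (q - rQ F s) < x \<and> x < rQ F s + (q - rQ F s))"
            using SEMI[OF e0, of s] by blast
          define lam where "lam = min (s + d / 2) 1"
          have lam: "s < lam" "lam \<le> 1" "\<bar>lam - s\<bar> < d" using d(1) sl1 by (auto simp: lam_def)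
          have "lam \<notin> T" using sT lam(1) by force
          then have "q \<le> rQ F lam" using lam s0 by (auto simp: T_def)
          moreover have "rQ F lam < q" using d(2)[OF lam(3)] lin(2)[of lam] lmax(2)[of lam] by auto
          ultimately show False by simp
        qed
      qed
      have 2: "lQ F s \<le> q"
      proof (cases "s \<in> T")
        case True
        then show ?thesis using lin(3)[of s] by (auto simp: T_def)
      next
        case sn: False
        show ?thesis
        proof (rule ccontr)
          assume "\<not> ?thesis"
          then have e0: "lQ F s - q > 0" by simp
          obtain d where d: "d > 0" "\<And>lam. \<bar>lam - s\<bar> < d \<Longrightarrow>
            (\<forall>x\<in>{0..1}. Plam F lam x = Rstar F lam \<longrightarrow> lQ F s - (lQ F s - q) < x \<and> x < rQ F s + (lQ F s - q))"
            using SEMI[OF e0, of s] by blast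
          have "s - d < s" using d(1) by simp
          then obtain lam where lam: "lam \<in> T" "s - d < lam" using less_cSup_iff[OF False bT] by (auto simp: s_def)
          have "lam \<le> s" using sT lam(1) by simp
          then have "\<bar>lam - s\<bar> < d" using lam(2) by simp
          then have "q < rQ F lam" using d(2) lin(2)[of lam] lmax(2)[of lam] by auto
          moreover have "rQ F lam < q" using lam(1) by (auto simp: T_def)
          ultimately show False by simp
        qed
      qed
      show ?thesis using 1 2 s0 Qe[of s] by (intro exI[of _ s]) auto
    qed
  qed
  show ?thesis using part1 part2 part3 part4 part5 by blast
qed



locale vd =
  fixes F :: "real \<Rightarrow> real" and vL :: real and vH :: ereal
  assumes vd: "value_dist F vL vH"
begin

lemma vL0: "0 \<le> vL" and vLH: "ereal vL \<le> vH" and monoF: "mono F"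
  and lc: "\<And>t. (F \<longlongrightarrow> F t) (at_left t)" and top: "(F \<longlongrightarrow> 1) at_top"
  and below: "\<And>t. t \<le> vL \<Longrightarrow> F t = 0" and above: "\<And>t. vH < ereal t \<Longrightarrow> F t = 1"
  and smono: "strict_mono_on {t. vL \<le> t \<and> ereal t \<le> vH} F"
  and integ: "(\<lambda>t. 1 - F t) integrable_on {0..}"
  using vd unfolding value_dist_def by auto

lemma F_le1: "F x \<le> 1"
proof (rule tendsto_lowerbound[OF top])
  show "\<forall>\<^sub>F y in at_top. F x \<le> F y" using monoF
    by (auto simp: eventually_at_top_linorder mono_def intro!: exI[of _ x])
qed simp

lemma F_ge0: "0 \<le> F x"
proof (cases "x \<le> vL")
  case True then show ?thesis using below by simp
next
  case False then have "F vL \<le> F x" using monoF by (auto simp: mono_def)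
  then show ?thesis using below[of vL] by simp
qed

lemma S_ne: "0 < q \<Longrightarrow> {x. 1 - q < F x} \<noteq> {}"
proof -
  assume q: "0 < q"
  have "\<forall>\<^sub>F x in at_top. 1 - q < F x" using order_tendstoD(1)[OF top] q by simp
  then obtain x where "1 - q < F x" by (auto simp: eventually_at_top_linorder)
  then show ?thesis by auto
qed

lemma S_gt: "q \<le> 1 \<Longrightarrow> x \<in> {x. 1 - q < F x} \<Longrightarrow> vL < x"
  using below[of x] by force

lemma S_bdd: "q \<le> 1 \<Longrightarrow> bdd_below {x. 1 - q < F x}"
  by (rule bdd_belowI[of _ vL]) (use S_gt in force)

lemma v_ge: "0 < q \<Longrightarrow> q \<le> 1 \<Longrightarrow> vL \<le> vq F q"
  unfolding vq_def by (rule cInf_greatest[OF S_ne]) (use S_gt in force)+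

lemma v_nonneg: "0 < q \<Longrightarrow> q \<le> 1 \<Longrightarrow> 0 \<le> vq F q"
  using v_ge vL0 by force

lemma F_gt: "0 < q \<Longrightarrow> vq F q < x \<Longrightarrow> 1 - q < F x"
proof -
  assume q: "0 < q" and x: "vq F q < x"
  obtain y where y: "1 - q < F y" "y < x" using cInf_lessD[OF S_ne[OF q] x[unfolded vq_def]] by auto
  then show ?thesis using monoF by (smt (verit) monoD)
qed

lemma F_le: "q \<le> 1 \<Longrightarrow> x < vq F q \<Longrightarrow> F x \<le> 1 - q"
proof (rule ccontr)
  assume q: "q \<le> 1" and x: "x < vq F q" and "\<not> F x \<le> 1 - q"
  then have "x \<in> {x. 1 - q < F x}" by simp
  then have "vq F q \<le> x" unfolding vq_def by (rule cInf_lower[OF _ S_bdd[OF q]])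
  then show False using x by simp
qed

lemma F_le': "0 < q \<Longrightarrow> q \<le> 1 \<Longrightarrow> x \<le> vq F q \<Longrightarrow> F x \<le> 1 - q"
proof -
  assume q: "0 < q" "q \<le> 1" and x: "x \<le> vq F q"
  have lim: "F (vq F q) \<le> 1 - q"
  proof (rule tendsto_upperbound[OF lc])
    show "\<forall>\<^sub>F y in at_left (vq F q). F y \<le> 1 - q"
      using eventually_at_left_real[of "vq F q - 1" "vq F q"]
      by (rule eventually_mono) (use F_le q in auto)
  qed simp
  show ?thesis
  proof (cases "x = vq F q")
    case True then show ?thesis using lim by simp
  next
    case False then show ?thesis using F_le[OF q(2)] x by simp
  qed
qed

lemma v_le_vH: "0 < q \<Longrightarrow> q \<le> 1 \<Longrightarrow> ereal (vq F q) \<le> vH"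
proof (rule ccontr)
  assume q: "0 < q" "q \<le> 1" and "\<not> ereal (vq F q) \<le> vH"
  then have "vH < ereal (vq F q)" by simp
  then obtain z where z: "vH < ereal z" "ereal z < ereal (vq F q)" using ereal_dense2 by blast
  have "F z = 1" using above z(1) by simp
  moreover have "F z \<le> 1 - q" using F_le[OF q(2)] z(2) by simp
  ultimately show False using q by simp
qed

lemma v_mono: "0 < q \<Longrightarrow> q \<le> q' \<Longrightarrow> q' \<le> 1 \<Longrightarrow> vq F q' \<le> vq F q"
  unfolding vq_def by (rule cInf_superset_mono[OF S_ne S_bdd]) auto

lemma v_cont: "continuous_on {0<..1} (vq F)"
  unfolding continuous_on_iff
proof (intro ballI allI impI)
  fix q0 e :: real assume q0: "q0 \<in> {0<..1}" and e: "0 < e"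
  define x1 where "x1 = vq F q0 + e / 2"
  have Fx1: "1 - q0 < F x1" using F_gt[of q0 x1] q0 e by (simp add: x1_def)
  define d1 where "d1 = F x1 - (1 - q0)"
  have d1: "d1 > 0" using Fx1 by (simp add: d1_def)
  have up: "vq F q < vq F q0 + e" if "q \<in> {0<..1}" "q0 - d1 < q" for q
  proof -
    have "x1 \<in> {x. 1 - q < F x}" using that by (simp add: d1_def)
    then have "vq F q \<le> x1" unfolding vq_def by (rule cInf_lower[OF _ S_bdd]) (use that in simp)
    then show ?thesis using e by (simp add: x1_def)
  qed
  obtain d2 where d2: "d2 > 0" and lo: "\<And>q. q \<in> {0<..1} \<Longrightarrow> q < q0 + d2 \<Longrightarrow> vq F q0 - e < vq F q"
  proof (cases "vq F q0 = vL")
    case True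
    show ?thesis
    proof (rule that[of 1])
      fix q :: real assume q: "q \<in> {0<..1}"
      have "vL \<le> vq F q" using v_ge q by simp
      then show "vq F q0 - e < vq F q" using True e by simp
    qed simp
  next
    case False
    then have gt: "vL < vq F q0" using v_ge q0 by force
    define x where "x = max (vq F q0 - e / 2) ((vL + vq F q0) / 2)"
    define x' where "x' = (x + vq F q0) / 2"
    have xs: "vL < x" "x < x'" "x' < vq F q0" "vq F q0 - e < x" using gt e
      by (auto simp: x_def x'_def less_max_iff_disj)
    have "ereal (vq F q0) \<le> vH" using v_le_vH q0 by simp
    then have ex': "ereal x' \<le> vH" using xs(3) by (metis ereal_less_eq(3) less_imp_le order_trans)
    moreover have "ereal x \<le> ereal x'" using xs by simp
    ultimately have ex: "ereal x \<le> vH" by (rule order_trans[rotated])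
    have "F x < F x'"
      by (rule strict_mono_onD[OF smono]) (use xs ex ex' in auto)
    moreover have "F x' \<le> 1 - q0" using F_le q0 xs(3) by simp
    ultimately have Fx: "F x < 1 - q0" by simp
    define d where "d = 1 - q0 - F x"
    show ?thesis
    proof (rule that[of d])
      show "d > 0" using Fx by (simp add: d_def)
      fix q assume q: "q \<in> {0<..1}" "q < q0 + d"
      have "x \<le> vq F q" unfolding vq_def
      proof (rule cInf_greatest[OF S_ne])
        fix y assume y: "y \<in> {x. 1 - q < F x}"
        show "x \<le> y"
        proof (rule ccontr)
          assume "\<not> x \<le> y"
          then have "F y \<le> F x" using monoF by (simp add: mono_def)
          then show False using y q by (simp add: d_def)
        qed
      qed (use q in simp)
      then show "vq F q0 - e < vq F q" using xs by simp
    qed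
  qed
  show "\<exists>d>0. \<forall>x'\<in>{0<..1}. dist x' q0 < d \<longrightarrow> dist (vq F x') (vq F q0) < e"
  proof (intro exI[of _ "min d1 d2"] conjI ballI impI)
    show "0 < min d1 d2" using d1 d2 by simp
    fix q assume q: "q \<in> {0<..1}" and dq: "dist q q0 < min d1 d2"
    have "q0 - d1 < q" using dq by (simp add: dist_real_def abs_less_iff)
    then have "vq F q < vq F q0 + e" using up[OF q] by simp
    moreover have "q < q0 + d2" using dq by (simp add: dist_real_def abs_less_iff)
    then have "vq F q0 - e < vq F q" using lo[OF q] by simp
    ultimately show "dist (vq F q) (vq F q0) < e" by (simp add: dist_real_def)
  qed
qed

lemma v_int_sub: "0 < a \<Longrightarrow> b \<le> 1 \<Longrightarrow> vq F integrable_on {a..b}"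
  by (rule integrable_continuous_interval, rule continuous_on_subset[OF v_cont]) auto

lemma int_upper: "0 < a \<Longrightarrow> a \<le> b \<Longrightarrow> b \<le> 1 \<Longrightarrow> integral {a..b} (vq F) \<le> (b - a) * vq F a"
proof -
  assume ab: "0 < a" "a \<le> b" "b \<le> 1"
  have "integral {a..b} (vq F) \<le> integral {a..b} (\<lambda>_. vq F a)"
    by (rule integral_le[OF v_int_sub[OF ab(1,3)]]) (use ab v_mono in auto)
  then show ?thesis using ab by (simp add: content_real)
qed

lemma int0: "integral {c..c::real} f = 0"
  by (simp add: integral_unique[OF has_integral_refl(2)])

definition G where "G t = 1 - F t"

lemma G_int: "0 \<le> c \<Longrightarrow> G integrable_on {c..d}"
  by (rule integrable_on_subinterval[OF integ[folded G_def]]) auto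

lemma G_nonneg: "0 \<le> G t" using F_le1 by (simp add: G_def)

lemma G_bound: "0 \<le> c \<Longrightarrow> integral {c..d} G \<le> integral {0..} G"
  by (rule integral_subset_le) (use G_int integ[folded G_def] G_nonneg in auto)

lemma dyad: "integral {(1/2)^K..1} (vq F) + (1/2)^K * vq F ((1/2)^K)
    \<le> 2 * integral {vq F 1..vq F ((1/2)^K)} G + vq F 1"
proof (induction K)
  case 0
  then show ?case by (simp add: int0)
next
  case (Suc K)
  define q where "q = (1/2::real)^K"
  define q' where "q' = (1/2::real)^Suc K"
  have qq: "q = 2 * q'" by (simp add: q_def q'_def)
  have q0: "0 < q'" "q' < q" "q \<le> 1" by (auto simp: q_def q'_def power_le_one)
  have IH: "integral {q..1} (vq F) + q * vq F q \<le> 2 * integral {vq F 1..vq F q} G + vq F 1"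
    using Suc.IH by (simp add: q_def)
  have I1: "integral {q'..1} (vq F) = integral {q'..q} (vq F) + integral {q..1} (vq F)"
    using Henstock_Kurzweil_Integration.integral_combine[where a=q' and c=q and b=1 and f="vq F"] v_int_sub[of q' 1] q0 by simp
  have I2: "integral {q'..q} (vq F) \<le> q' * vq F q'"
    using int_upper[of q' q] q0 qq by simp
  have v1: "vq F 1 \<le> vq F q" "vq F q \<le> vq F q'" using v_mono q0 by auto
  have v10: "0 \<le> vq F 1" using v_nonneg by simp
  have J1: "integral {vq F 1..vq F q'} G = integral {vq F 1..vq F q} G + integral {vq F q..vq F q'} G"
    using Henstock_Kurzweil_Integration.integral_combine[where a="vq F 1" and c="vq F q" and b="vq F q'" and f=G] G_int[OF v10] v1 by simp
  have J2: "integral {vq F q..vq F q'} (\<lambda>_. q') \<le> integral {vq F q..vq F q'} G"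
  proof (rule integral_le)
    show "(\<lambda>_. q') integrable_on {vq F q..vq F q'}" by (rule integrable_continuous_interval) simp
    show "G integrable_on {vq F q..vq F q'}" using G_int v1 v10 by simp
    fix t assume "t \<in> {vq F q..vq F q'}"
    then have "F t \<le> 1 - q'" using F_le'[of q' t] q0 by simp
    then show "q' \<le> G t" by (simp add: G_def)
  qed
  then have J2': "q' * vq F q' - q' * vq F q \<le> integral {vq F q..vq F q'} G"
    using v1 by (simp add: content_real algebra_simps)
  have e: "q * vq F q = 2 * (q' * vq F q)" by (simp add: qq)
  have "integral {q'..1} (vq F) + q' * vq F q' \<le> 2 * integral {vq F 1..vq F q'} G + vq F 1"
    using IH I1 I2 J1 J2' e by linarith
  then show ?case by (simp add: q'_def)
qed

lemma dyad_bound: "integral {(1/2)^K..1} (vq F) \<le> 2 * integral {0..} G + vq F 1"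
proof -
  have a: "0 \<le> (1/2::real)^K * vq F ((1/2)^K)" using v_nonneg[of "(1/2)^K"] by (simp add: power_le_one)
  have b: "integral {vq F 1..vq F ((1/2)^K)} G \<le> integral {0..} G" using G_bound v_nonneg by simp
  show ?thesis using dyad[of K] a b by linarith
qed

lemma v_int: "vq F integrable_on {0..1}"
proof -
  define f where "f k x = (if x \<in> {(1/2::real)^k..1} then vq F x else 0)" for k x
  define g where "g x = (if 0 < x then vq F x else 0)" for x :: real
  have sub: "{(1/2::real)^k..1} \<inter> {0..1} = {(1/2)^k..1}" for k by auto
  have fi: "f k integrable_on {0..1}" for k
    unfolding f_def integrable_restrict_Int sub by (rule v_int_sub) auto
  have fint: "integral {0..1} (f k) = integral {(1/2)^k..1} (vq F)" for k
    unfolding f_def integral_restrict_Int sub ..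
  have mc: "g integrable_on {0..1} \<and> ((\<lambda>k. integral {0..1} (f k)) \<longlonglongrightarrow> integral {0..1} g)"
  proof (rule monotone_convergence_increasing[OF fi])
    fix k x assume x: "(x::real) \<in> {0..1}"
    have "(1/2::real)^Suc k \<le> (1/2)^k" by (simp add: power_decreasing)
    moreover have "0 < (1/2::real)^Suc k" by simp
    ultimately show "f k x \<le> f (Suc k) x" using x v_nonneg[of x] by (auto simp: f_def)
  next
    fix x :: real assume x: "x \<in> {0..1}"
    show "(\<lambda>k. f k x) \<longlonglongrightarrow> g x"
    proof (cases "x = 0")
      case True
      have "f k x = 0" for k
      proof -
        have "\<not> (1/2::real)^k \<le> 0" by (simp add: not_le)
        then have nx: "x \<notin> {(1/2::real)^k..1}" using True by simp
        show ?thesis unfolding f_def by (rule if_not_P[OF nx])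
      qed
      then show ?thesis using True by (simp add: g_def)
    next
      case False
      then have xp: "0 < x" using x by simp
      have "\<forall>\<^sub>F k in sequentially. (1/2::real)^k < x"
        using order_tendstoD(2)[OF LIMSEQ_realpow_zero[of "1/2::real"] xp] by simp
      then have "\<forall>\<^sub>F k in sequentially. f k x = g x"
        by (rule eventually_mono) (use x xp in \<open>auto simp: f_def g_def\<close>)
      then show ?thesis by (rule tendsto_eventually)
    qed
  next
    show "bounded (range (\<lambda>k. integral {0..1} (f k)))"
      unfolding bounded_iff
    proof (intro exI[of _ "2 * integral {0..} G + vq F 1"] ballI)
      fix y assume "y \<in> range (\<lambda>k. integral {0..1} (f k))"
      then obtain k where y: "y = integral {(1/2)^k..1} (vq F)" using fint by auto
      have "0 \<le> integral {(1/2::real)^k..1} (vq F)"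
      proof -
        have "integral {(1/2::real)^k..1} (\<lambda>_. 0) \<le> integral {(1/2)^k..1} (vq F)"
          by (rule integral_le[OF _ v_int_sub]) (auto intro!: v_nonneg simp: power_le_one order_less_le_trans[of 0 "(1/2)^k"])
        then show ?thesis by simp
      qed
      then show "norm y \<le> 2 * integral {0..} G + vq F 1" using dyad_bound[of k] y by simp
    qed
  qed
  show ?thesis
    by (rule integrable_spike_finite[where S="{0}" and f=g and g="vq F" and T="{0..1}"]) (use mc in \<open>auto simp: g_def\<close>)
qed

lemma int_lower: "0 \<le> a \<Longrightarrow> a \<le> b \<Longrightarrow> 0 < b \<Longrightarrow> b \<le> 1 \<Longrightarrow> (b - a) * vq F b \<le> integral {a..b} (vq F)"
proof -
  assume ab: "0 \<le> a" "a \<le> b" "0 < b" "b \<le> 1"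
  have iab: "vq F integrable_on {a..b}" by (rule integrable_on_subinterval[OF v_int]) (use ab in auto)
  define g where "g x = (if x = a then vq F b else vq F x)" for x
  have e: "integral {a..b} (vq F) = integral {a..b} g"
    by (rule integral_spike[where S="{a}"]) (auto simp: g_def)
  have gi: "g integrable_on {a..b}"
    by (rule integrable_spike_finite[where S="{a}" and f="vq F" and g=g and T="{a..b}"]) (use iab in \<open>auto simp: g_def\<close>)
  have "integral {a..b} (\<lambda>_. vq F b) \<le> integral {a..b} g"
  proof (rule integral_le[OF _ gi])
    show "(\<lambda>_. vq F b) integrable_on {a..b}" by (rule integrable_continuous_interval) simp
    fix x assume x: "x \<in> {a..b}"
    show "vq F b \<le> g x"
    proof (cases "x = a")
      case False
      then have "0 < x" using x ab by auto
      then show ?thesis using v_mono[of x b] x ab False by (simp add: g_def)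
    qed (simp add: g_def)
  qed
  then show ?thesis using e ab by (simp add: content_real)
qed

abbreviation A where "A q \<equiv> integral {0..q} (vq F)"

lemma A_cont: "continuous_on {0..1} (\<lambda>q. integral {0..q} (vq F))"
  by (rule indefinite_integral_continuous_1[OF v_int])

lemma A_diff: "0 \<le> x \<Longrightarrow> x \<le> y \<Longrightarrow> y \<le> 1 \<Longrightarrow> A y - A x = integral {x..y} (vq F)"
proof -
  assume h: "0 \<le> x" "x \<le> y" "y \<le> 1"
  have "vq F integrable_on {0..y}" by (rule integrable_on_subinterval[OF v_int]) (use h in auto)
  then show ?thesis
    using Henstock_Kurzweil_Integration.integral_combine[where a=0 and c=x and b=y and f="vq F"] h by simp
qed

lemma tv_lim: "((\<lambda>t. t * vq F t) \<longlongrightarrow> 0) (at_right 0)"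
proof (rule tendsto_sandwich[where f="\<lambda>_. 0" and h=A])
  have ev: "\<forall>\<^sub>F t in at_right 0. t \<in> {0<..<1::real}" by (rule eventually_at_right_real) simp
  show "\<forall>\<^sub>F t in at_right 0. 0 \<le> t * vq F t"
    by (rule eventually_mono[OF ev]) (auto intro!: mult_nonneg_nonneg v_nonneg)
  show "\<forall>\<^sub>F t in at_right 0. t * vq F t \<le> A t"
    by (rule eventually_mono[OF ev]) (use int_lower[of 0] in auto)
  have "(A \<longlongrightarrow> A 0) (at_right 0)" by (rule continuous_on_Icc_at_rightD[OF A_cont]) simp
  then show "(A \<longlongrightarrow> 0) (at_right 0)" by (simp add: int0)
qed simp

lemma qv0: "qv F 0 = 0"
  unfolding qv_def using tendsto_Lim[OF _ tv_lim] by simp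

lemma qv_pos: "q \<noteq> 0 \<Longrightarrow> qv F q = q * vq F q"
  by (simp add: qv_def)

lemma B_cont: "continuous_on {0..1} (qv F)"
  unfolding continuous_on_eq_continuous_within
proof
  fix x :: real assume x: "x \<in> {0..1}"
  show "continuous (at x within {0..1}) (qv F)"
  proof (cases "x = 0")
    case True
    have ev: "\<forall>\<^sub>F t in at_right 0. t \<in> {0<..<1::real}" by (rule eventually_at_right_real) simp
    have ev2: "\<forall>\<^sub>F t in at_right 0. t * vq F t = qv F t"
      by (rule eventually_mono[OF ev]) (auto simp: qv_pos)
    have "(qv F \<longlongrightarrow> 0) (at_right 0)" using tendsto_cong[OF ev2, THEN iffD1, OF tv_lim] .
    moreover have "at x within {0..1} = at_right (0::real)" using True by (simp add: at_within_Icc_at_right)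
    ultimately show ?thesis using True unfolding continuous_within by (simp add: qv0)
  next
    case False
    then have xp: "0 < x" "x \<le> 1" using x by auto
    have c: "continuous_on {0<..1} (\<lambda>q. q * vq F q)" by (intro continuous_intros v_cont)
    have "((\<lambda>q. q * vq F q) \<longlongrightarrow> x * vq F x) (at x within {0<..1})"
      using c xp unfolding continuous_on_def by auto
    moreover have "at x within {0..1} = at x within {0<..1}"
      by (rule at_within_nhd[where S="{0<..<2}"]) (use xp in auto)
    ultimately have l: "((\<lambda>q. q * vq F q) \<longlongrightarrow> x * vq F x) (at x within {0..1})" by simp
    have ev3: "\<forall>\<^sub>F t in at x within {0..1}. t * vq F t = qv F t"
      unfolding eventually_at
    proof (intro exI[of _ x] conjI ballI impI)
      fix t :: real assume "t \<in> {0..1}" "t \<noteq> x \<and> dist t x < x"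
      then have "t \<noteq> 0" by (auto simp: dist_real_def)
      then show "t * vq F t = qv F t" by (simp add: qv_pos)
    qed (use xp in simp)
    have "(qv F \<longlongrightarrow> x * vq F x) (at x within {0..1})" using tendsto_cong[OF ev3, THEN iffD1, OF l] .
    then show ?thesis unfolding continuous_within using qv_pos[OF False] by simp
  qed
qed

lemma Dmono: "0 \<le> x \<Longrightarrow> x \<le> y \<Longrightarrow> y \<le> 1 \<Longrightarrow> A x - qv F x \<le> A y - qv F y"
proof -
  assume h: "0 \<le> x" "x \<le> y" "y \<le> 1"
  show ?thesis
  proof (cases "x = y")
    case False
    then have yp: "0 < y" using h by auto
    have i: "(y - x) * vq F y \<le> A y - A x" using int_lower[of x y] A_diff[of x y] h yp by simp
    have bx: "x * vq F y \<le> qv F x"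
    proof (cases "x = 0")
      case True then show ?thesis by (simp add: qv0)
    next
      case False
      then have "vq F y \<le> vq F x" using v_mono[of x y] h by simp
      then show ?thesis using False h by (simp add: qv_pos mult_left_mono)
    qed
    have by': "qv F y = y * vq F y" using yp by (simp add: qv_pos)
    show ?thesis using i bx by' by (simp add: algebra_simps)
  qed simp
qed

lemma Amono: "x \<in> {0..1} \<Longrightarrow> A x \<le> A 1"
proof -
  assume x: "x \<in> {0..1}"
  have "0 \<le> (1 - x) * vq F 1" using x v_nonneg[of 1] by (simp add: mult_nonneg_nonneg)
  then show ?thesis using A_diff[of x 1] int_lower[of x 1] x by simp
qed

lemma Xprop: "0 \<le> x \<Longrightarrow> x < y \<Longrightarrow> y \<le> 1 \<Longrightarrow> A x - qv F x = A y - qv F y \<Longrightarrow> qv F x = qv F y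
              \<Longrightarrow> A 1 = A y \<and> qv F 1 = qv F y"
proof -
  assume h: "0 \<le> x" "x < y" "y \<le> 1" "A x - qv F x = A y - qv F y" "qv F x = qv F y"
  have "A y - A x = 0" using h by simp
  then have "(y - x) * vq F y \<le> 0" using int_lower[of x y] A_diff[of x y] h by simp
  then have vy: "vq F y = 0" using v_nonneg[of y] h by (simp add: mult_le_0_iff)
  have v1: "vq F 1 = 0" using v_mono[of y 1] v_nonneg[of 1] h vy by simp
  have "integral {y..1} (vq F) \<le> 0" using int_upper[of y 1] h vy by simp
  moreover have "0 \<le> integral {y..1} (vq F)" using int_lower[of y 1] h v1 by simp
  ultimately have "A 1 - A y = 0" using A_diff[of y 1] h by simp
  moreover have "qv F 1 = qv F y" using h vy v1 by (simp add: qv_pos)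
  ultimately show ?thesis by simp
qed

end

theorem propositionB1:
  fixes F :: "real \<Rightarrow> real" and vL :: real and vH :: ereal
  assumes "value_dist F vL vH"
  shows "continuous_on {0..} (Rstar F) \<and>
     (\<forall>lam lam'. 0 \<le> lam' \<and> lam' < lam \<longrightarrow> lQ F lam \<ge> lQ F lam' \<and> rQ F lam \<ge> rQ F lam') \<and>
     upper_hemicontinuous_on {0..1} (Qstar F) \<and>
     (\<forall>q\<in>{lQ F 0..1}. \<exists>lam\<ge>0. q \<in> Qstar F lam) \<and>
     (\<forall>lam lam'. 0 \<le> lam' \<and> lam' < lam \<and> lQ F lam < rQ F lam' \<longrightarrow> rQ F lam' = 1 \<and> rQ F lam = 1)"
proof -
  interpret vd F vL vH by (rule vd.intro[OF assms])
  show ?thesis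
  proof (rule ABS[where A="\<lambda>q. integral {0..q} (vq F)" and B="qv F"])
    show "\<And>lam q. Plam F lam q = lam * integral {0..q} (vq F) + (1 - lam) * qv F q"
      by (simp add: Plam_def)
    show "continuous_on {0..1} (\<lambda>q. integral {0..q} (vq F))" by (rule A_cont)
    show "continuous_on {0..1} (qv F)" by (rule B_cont)
    show "\<And>x y. 0 \<le> x \<Longrightarrow> x \<le> y \<Longrightarrow> y \<le> 1 \<Longrightarrow>
      integral {0..x} (vq F) - qv F x \<le> integral {0..y} (vq F) - qv F y" by (rule Dmono)
    show "\<And>x. x \<in> {0..1} \<Longrightarrow> integral {0..x} (vq F) \<le> integral {0..1} (vq F)" by (rule Amono)
    show "\<And>x y. 0 \<le> x \<Longrightarrow> x < y \<Longrightarrow> y \<le> 1 \<Longrightarrow>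
      integral {0..x} (vq F) - qv F x = integral {0..y} (vq F) - qv F y \<Longrightarrow> qv F x = qv F y \<Longrightarrow>
      integral {0..1} (vq F) = integral {0..y} (vq F) \<and> qv F 1 = qv F y" by (rule Xprop)
  qed
qed

end
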